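(* Let $A\in\mathbb{R}^{n\times n}$ be symmetric, $Z\in\mathbb{R}^{n\times k}$, $\alpha\in\{+1,-1\}$, $\beta\in\{+1,-1\}$, and suppose that both $A$ and $A+\alpha ZZ^{T}$ are positive definite. Let $V\in\mathbb{R}^{n\times k}$ be defined by $V=Z$ if $\beta=1$ and $V=A^{-1}Z(I_k+\alpha Z^{T}A^{-1}Z)^{-1/2}$ if $\beta=-1$, and for $\tilde{C}\in\mathbb{R}^{n\times n}$ let $R(\tilde{C})=VV^{T}-A^{\beta/2}\tilde{C}-\tilde{C}A^{\beta/2}-\alpha\beta\tilde{C}^{2}$. Let $\tilde{C}$ be a positive semidefinite matrix such that $A^{\beta/2}+\alpha\beta\tilde{C}$ is positive definite. Then \[ \|(A+\alpha ZZ^{T})^{\beta/2}-(A^{\beta/2}+\alpha\beta\tilde{C})\|_{F}\leq\left(n^{1/2}\|R(\tilde{C})\|_{F}\right)^{1/2}, \] \[ \|(A+\alpha ZZ^{T})^{\beta/2}-(A^{\beta/2}+\alpha\beta\tilde{C})\|_{2}\leq\min\left\{ \frac{\|R(\tilde{C})\|_{F}}{\sqrt{\lambda_{\min}((A+\alpha ZZ^{T})^{\beta})}},\left(n^{1/2}\|R(\tilde{C})\|_{F}\right)^{1/2}\right\}. \]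
   Context: For a symmetric positive definite matrix $M$, $M^{1/2}$ is its principal square root and $M^{-1/2}=(M^{1/2})^{-1}$; $M^{\beta/2},M^{\beta}$ are interpreted accordingly. $\|\cdot\|_F$ is the Frobenius norm, $\|\cdot\|_2$ the spectral norm, $\lambda_{\min}$ the smallest eigenvalue. *)

theory Defs
  imports "HOL-Analysis.Analysis"
begin

text \<open>Matrices are real^'c^'r (rows indexed by 'r, columns by 'c); n = CARD('n).\<close>

definition sym_mat :: "real^'n^'n \<Rightarrow> bool" where
  "sym_mat M \<longleftrightarrow> transpose M = M"

definition pos_def :: "real^'n^'n \<Rightarrow> bool" where
  "pos_def M \<longleftrightarrow> sym_mat M \<and> (\<forall>x. x \<noteq> 0 \<longrightarrow> x \<bullet> (M *v x) > 0)"

definition pos_semidef :: "real^'n^'n \<Rightarrow> bool" where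
  "pos_semidef M \<longleftrightarrow> sym_mat M \<and> (\<forall>x. x \<bullet> (M *v x) \<ge> 0)"

definition msqrt :: "real^'n^'n \<Rightarrow> real^'n^'n" where
  "msqrt M = (THE S. pos_semidef S \<and> S ** S = M)"

text \<open>M^(beta/2) and M^beta for beta in {1,-1}.\<close>
definition mpow_half :: "real \<Rightarrow> real^'n^'n \<Rightarrow> real^'n^'n" where
  "mpow_half \<beta> M = (if \<beta> = 1 then msqrt M else matrix_inv (msqrt M))"

definition mpow :: "real \<Rightarrow> real^'n^'n \<Rightarrow> real^'n^'n" where
  "mpow \<beta> M = (if \<beta> = 1 then M else matrix_inv M)"

definition frob_norm :: "real^'c^'r \<Rightarrow> real" where
  "frob_norm M = sqrt (\<Sum>i\<in>UNIV. \<Sum>j\<in>UNIV. (M $ i $ j)^2)"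

definition spec_norm :: "real^'c^'r \<Rightarrow> real" where
  "spec_norm M = onorm (\<lambda>x. M *v x)"

definition lambda_min :: "real^'n^'n \<Rightarrow> real" where
  "lambda_min M = Min {l. \<exists>v. v \<noteq> 0 \<and> M *v v = l *\<^sub>R v}"

end

theory Submission
  imports Defs
begin

lemma mv_scaleR: "(k *\<^sub>R M) *v x = k *\<^sub>R (M *v (x::real^'n))"
  by (simp add: vec_eq_iff matrix_vector_mult_def sum_distrib_left mult.assoc)

lemma inner_mv_transpose: "(x::real^'n) \<bullet> (M *v y) = (transpose M *v x) \<bullet> y"
  by (simp add: dot_lmul_matrix[symmetric])

lemma inner_mv_sym: "sym_mat M \<Longrightarrow> (x::real^'n) \<bullet> (M *v y) = (M *v x) \<bullet> y"
  by (metis inner_mv_transpose sym_mat_def)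

lemma dim_vec: "DIM(real^'n) = CARD('n)"
  by simp

lemma eig_step:
  fixes M :: "real^'n^'n"
  assumes sym: "sym_mat M" and fin: "finite B" and cardB: "card B < CARD('n)"
    and orth: "\<And>b c. b \<in> B \<Longrightarrow> c \<in> B \<Longrightarrow> b \<noteq> c \<Longrightarrow> b \<bullet> c = 0"
    and eig: "\<And>b. b \<in> B \<Longrightarrow> M *v b = (b \<bullet> (M *v b)) *\<^sub>R b"
  obtains x where "norm x = 1" "\<And>b. b \<in> B \<Longrightarrow> b \<bullet> x = 0" "M *v x = (x \<bullet> (M *v x)) *\<^sub>R x"
proof -
  define W where "W = (\<Inter>b\<in>B. {y::real^'n. b \<bullet> y = 0})"
  have W_iff: "y \<in> W \<longleftrightarrow> (\<forall>b\<in>B. b \<bullet> y = 0)" for y unfolding W_def by auto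
  define S where "S = W \<inter> sphere 0 1"
  have "closed W" unfolding W_def
    by (intro closed_INT ballI closed_hyperplane)
  hence cS: "compact S" unfolding S_def by (simp add: compact_Int_closed closed_Int_compact)
  have dB: "dim B < DIM(real^'n)" using dim_le_card'[OF fin] cardB by simp
  then obtain z :: "real^'n" where z: "z \<noteq> 0" "\<And>y. y \<in> span B \<Longrightarrow> orthogonal z y"
    using orthogonal_to_subspace_exists[OF dB] by blast
  have "z /\<^sub>R norm z \<in> S"
    using z by (auto simp: S_def W_iff orthogonal_def span_base inner_commute)
  hence neS: "S \<noteq> {}" by auto
  define f where "f y = y \<bullet> (M *v y)" for y
  have "continuous_on S f" unfolding f_def
    by (intro continuous_intros linear_continuous_on matrix_vector_mul_linear bounded_linear_inner_left)
  then obtain x where xS: "x \<in> S" and xmax: "\<And>y. y \<in> S \<Longrightarrow> f y \<le> f x"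
    using continuous_attains_sup[OF cS neS] by blast
  define l where "l = f x"
  have xW: "x \<in> W" and nx: "norm x = 1" using xS by (auto simp: S_def)
  have bound: "f y \<le> l * (y \<bullet> y)" if yW: "y \<in> W" for y
  proof (cases "y = 0")
    case True then show ?thesis by (simp add: f_def)
  next
    case False
    have "y /\<^sub>R norm y \<in> S" using yW False by (auto simp: S_def W_iff)
    hence "f (y /\<^sub>R norm y) \<le> l" using xmax l_def by blast
    moreover have "f (y /\<^sub>R norm y) = f y / (norm y)^2"
      by (simp add: f_def mv_scaleR matrix_vector_mult_scaleR power2_eq_square field_simps)
    ultimately have "f y / (norm y)^2 \<le> l" by simp
    moreover have "(norm y)^2 > 0" using False by simp
    ultimately show ?thesis by (simp add: divide_le_eq power2_norm_eq_inner)
  qed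
  define y where "y = M *v x - l *\<^sub>R x"
  have yW: "y \<in> W" unfolding W_iff y_def
  proof
    fix b assume bB: "b \<in> B"
    have "b \<bullet> x = 0" using xW bB W_iff by blast
    moreover have "b \<bullet> (M *v x) = (b \<bullet> (M *v b)) * (b \<bullet> x)"
      using inner_mv_sym[OF sym, of b x] eig[OF bB] by (metis inner_scaleR_left)
    ultimately show "b \<bullet> (M *v x - l *\<^sub>R x) = 0" by (simp add: inner_diff_right)
  qed
  define g where "g = y \<bullet> y"
  define c where "c = l * (y \<bullet> y) - f y"
  have c0: "c \<ge> 0" using bound[OF yW] by (simp add: c_def)
  have key: "2 * t * g \<le> t^2 * c" for t
  proof -
    have "x + t *\<^sub>R y \<in> W" using xW yW by (auto simp: W_iff inner_add_right)
    hence A: "f (x + t *\<^sub>R y) \<le> l * ((x + t *\<^sub>R y) \<bullet> (x + t *\<^sub>R y))" by (rule bound)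
    have B: "f (x + t *\<^sub>R y) = l + 2 * t * (y \<bullet> (M *v x)) + t^2 * f y"
    proof -
      have "x \<bullet> (M *v y) = y \<bullet> (M *v x)" using inner_mv_sym[OF sym, of x y] by (simp add: inner_commute)
      thus ?thesis
        by (simp add: l_def f_def matrix_vector_right_distrib matrix_vector_mult_scaleR inner_add_left inner_add_right power2_eq_square algebra_simps)
    qed
    have N: "(x + t *\<^sub>R y) \<bullet> (x + t *\<^sub>R y) = 1 + 2 * t * (x \<bullet> y) + t^2 * (y \<bullet> y)"
    proof -
      have "x \<bullet> x = 1" using nx by (simp add: dot_square_norm)
      thus ?thesis by (simp add: inner_add_left inner_add_right power2_eq_square algebra_simps inner_commute)
    qed
    have G: "y \<bullet> (M *v x) = g + l * (x \<bullet> y)"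
      by (simp add: g_def y_def inner_diff_right inner_diff_left inner_commute algebra_simps)
    have E: "t^2 * c - 2 * t * g = l * (1 + 2 * t * (x \<bullet> y) + t^2 * (y \<bullet> y)) - f (x + t *\<^sub>R y)"
      unfolding B G c_def by (simp add: algebra_simps)
    show ?thesis using A N E by simp
  qed
  have "g = 0"
  proof (rule ccontr)
    assume "g \<noteq> 0"
    hence gp: "g > 0" using g_def by (simp add: order_le_neq_trans)
    define s where "s = 1 / (c + 1)"
    have sp: "s > 0" using c0 by (simp add: s_def)
    have "2 * (g * s) * g \<le> (g * s)^2 * c" by (rule key)
    hence "(g * g * s) * 2 \<le> (g * g * s) * (s * c)" by (simp add: power2_eq_square algebra_simps)
    moreover have "g * g * s > 0" using gp sp by simp
    ultimately have "2 \<le> s * c" using mult_le_cancel_left_pos by blast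
    moreover have "s * c < 1" using c0 by (simp add: s_def)
    ultimately show False by simp
  qed
  hence "y = 0" by (simp add: g_def)
  hence "M *v x = l *\<^sub>R x" by (simp add: y_def)
  moreover have "l = x \<bullet> (M *v x)" by (simp add: l_def f_def)
  ultimately show ?thesis using that nx xW W_iff by blast
qed

lemma spectral_aux:
  fixes M :: "real^'n^'n"
  assumes sym: "sym_mat M"
  shows "k \<le> CARD('n) \<Longrightarrow> \<exists>B. finite B \<and> card B = k \<and> (\<forall>b\<in>B. norm b = 1)
     \<and> (\<forall>b\<in>B. \<forall>c\<in>B. b \<noteq> c \<longrightarrow> b \<bullet> c = 0) \<and> (\<forall>b\<in>B. M *v b = (b \<bullet> (M *v b)) *\<^sub>R b)"
proof (induction k)
  case 0
  then show ?case by (intro exI[of _ "{}"]) auto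
next
  case (Suc k)
  then obtain B where B: "finite B" "card B = k" "\<forall>b\<in>B. norm b = 1"
     "\<forall>b\<in>B. \<forall>c\<in>B. b \<noteq> c \<longrightarrow> b \<bullet> c = 0" "\<forall>b\<in>B. M *v b = (b \<bullet> (M *v b)) *\<^sub>R b"
    by auto
  obtain x where x: "norm x = 1" "\<And>b. b \<in> B \<Longrightarrow> b \<bullet> x = 0" "M *v x = (x \<bullet> (M *v x)) *\<^sub>R x"
    using eig_step[OF sym B(1), of thesis] B Suc.prems by auto
  have "x \<notin> B" using x(1,2) by (metis norm_eq_1 zero_neq_one)
  then show ?case using B x
    by (intro exI[of _ "insert x B"]) (auto simp: inner_commute)
qed

lemma spectral:
  fixes M :: "real^'n^'n"
  assumes sym: "sym_mat M"
  obtains B where "finite B" "card B = CARD('n)" "\<And>b. b\<in>B \<Longrightarrow> norm b = 1"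
     "\<And>b c. b\<in>B \<Longrightarrow> c\<in>B \<Longrightarrow> b \<noteq> c \<Longrightarrow> b \<bullet> c = 0"
     "\<And>b. b\<in>B \<Longrightarrow> M *v b = (b \<bullet> (M *v b)) *\<^sub>R b"
     "\<And>x. (\<Sum>b\<in>B. (x \<bullet> b) *\<^sub>R b) = x"
proof -
  obtain B where B: "finite B" "card B = CARD('n)" "\<forall>b\<in>B. norm b = 1"
     "\<forall>b\<in>B. \<forall>c\<in>B. b \<noteq> c \<longrightarrow> b \<bullet> c = 0" "\<forall>b\<in>B. M *v b = (b \<bullet> (M *v b)) *\<^sub>R b"
    using spectral_aux[OF sym, of "CARD('n)"] by auto
  have po: "pairwise orthogonal B" using B(4) by (auto simp: pairwise_def orthogonal_def)
  have "0 \<notin> B" using B(3) by force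
  hence ind: "independent B" using pairwise_orthogonal_independent[OF po] by blast
  have "UNIV \<subseteq> span B"
    using eucl.card_eq_dim[of B UNIV] ind B(1,2) by (simp add: dim_UNIV)
  hence "(\<Sum>b\<in>B. (x \<bullet> b) *\<^sub>R b) = x" for x
    using orthonormal_basis_expand[OF po _ _ B(1)] B(3) by blast
  thus ?thesis using that B by blast
qed

definition onb :: "(real^'n) set \<Rightarrow> bool" where
  "onb B \<longleftrightarrow> finite B \<and> card B = CARD('n) \<and> (\<forall>b\<in>B. norm b = 1) \<and>
     (\<forall>b\<in>B. \<forall>c\<in>B. b \<noteq> c \<longrightarrow> b \<bullet> c = 0) \<and> (\<forall>x. (\<Sum>b\<in>B. (x \<bullet> b) *\<^sub>R b) = x)"

lemma spectral_onb:
  fixes M :: "real^'n^'n"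
  assumes "sym_mat M"
  obtains B where "onb B" "\<And>b. b\<in>B \<Longrightarrow> M *v b = (b \<bullet> (M *v b)) *\<^sub>R b"
proof -
  obtain B where B: "finite B" "card B = CARD('n)" "\<And>b. b\<in>B \<Longrightarrow> norm b = 1"
     "\<And>b c. b\<in>B \<Longrightarrow> c\<in>B \<Longrightarrow> b \<noteq> c \<Longrightarrow> b \<bullet> c = 0"
     "\<And>b. b\<in>B \<Longrightarrow> M *v b = (b \<bullet> (M *v b)) *\<^sub>R b"
     "\<And>x. (\<Sum>b\<in>B. (x \<bullet> b) *\<^sub>R b) = x"
    using spectral[OF assms] by blast
  have "onb B" unfolding onb_def using B(1,2,3,4,6) by blast
  thus ?thesis using that B(5) by blast
qed

lemma onb_inner: "onb B \<Longrightarrow> x \<bullet> y = (\<Sum>b\<in>B. (x \<bullet> b) * (y \<bullet> b))"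
proof -
  assume "onb B"
  hence "y = (\<Sum>b\<in>B. (y \<bullet> b) *\<^sub>R b)" unfolding onb_def by simp
  hence "x \<bullet> y = x \<bullet> (\<Sum>b\<in>B. (y \<bullet> b) *\<^sub>R b)" by simp
  also have "\<dots> = (\<Sum>b\<in>B. (x \<bullet> b) * (y \<bullet> b))" by (simp add: inner_sum_right mult.commute)
  finally show ?thesis .
qed

lemma onb_norm2: "onb B \<Longrightarrow> (norm x)^2 = (\<Sum>b\<in>B. (x \<bullet> b)^2)"
proof -
  assume B: "onb B"
  have "(norm x)^2 = x \<bullet> x" by (rule power2_norm_eq_inner)
  also have "\<dots> = (\<Sum>b\<in>B. (x \<bullet> b) * (x \<bullet> b))" by (rule onb_inner[OF B])
  finally show ?thesis by (simp add: power2_eq_square)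
qed

lemma norm2_mv: "(norm ((M::real^'c^'r) *v x))^2 = (\<Sum>i\<in>UNIV. ((M$i) \<bullet> x)^2)"
proof -
  have "(norm (M *v x))^2 = (M *v x) \<bullet> (M *v x)" by (rule power2_norm_eq_inner)
  also have "\<dots> = (\<Sum>i\<in>UNIV. (M *v x)$i * (M *v x)$i)" by (simp add: inner_vec_def)
  finally show ?thesis by (simp add: matrix_vector_mul_component power2_eq_square)
qed

lemma onb_eq: "onb B \<Longrightarrow> (\<And>c. c \<in> B \<Longrightarrow> u \<bullet> c = v \<bullet> c) \<Longrightarrow> u = v"
proof -
  assume B: "onb B" and h: "\<And>c. c \<in> B \<Longrightarrow> u \<bullet> c = v \<bullet> c"
  have "u = (\<Sum>b\<in>B. (u \<bullet> b) *\<^sub>R b)" using B unfolding onb_def by simp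
  also have "\<dots> = (\<Sum>b\<in>B. (v \<bullet> b) *\<^sub>R b)" using h by simp
  also have "\<dots> = v" using B unfolding onb_def by simp
  finally show ?thesis .
qed

lemma onb_unit: "onb B \<Longrightarrow> b \<in> B \<Longrightarrow> norm b = 1"
  unfolding onb_def by blast

lemma onb_self: "onb B \<Longrightarrow> b \<in> B \<Longrightarrow> b \<bullet> b = 1"
  using onb_unit by (metis norm_eq_1)

lemma onb_orth: "onb B \<Longrightarrow> b \<in> B \<Longrightarrow> c \<in> B \<Longrightarrow> b \<noteq> c \<Longrightarrow> b \<bullet> c = 0"
  unfolding onb_def by blast

lemma onb_finite: "onb B \<Longrightarrow> finite B" unfolding onb_def by blast
lemma onb_card: "onb B \<Longrightarrow> card B = CARD('n)" for B :: "(real^'n) set" unfolding onb_def by blast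

lemma frob2: "(frob_norm (M::real^'c^'r))^2 = (\<Sum>i\<in>UNIV. (M$i) \<bullet> (M$i))"
proof -
  have "(frob_norm M)^2 = (\<Sum>i\<in>UNIV. \<Sum>j\<in>UNIV. (M $ i $ j)^2)"
    unfolding frob_norm_def by (rule real_sqrt_pow2) (intro sum_nonneg zero_le_power2)
  also have "\<dots> = (\<Sum>i\<in>UNIV. (M$i) \<bullet> (M$i))"
    by (simp add: inner_vec_def power2_eq_square)
  finally show ?thesis .
qed

lemma frob_nonneg: "frob_norm M \<ge> 0"
  unfolding frob_norm_def by (simp add: sum_nonneg)

lemma frob_onb: "onb B \<Longrightarrow> (frob_norm (M::real^'n^'r))^2 = (\<Sum>b\<in>B. (norm (M *v b))^2)"
proof -
  assume B: "onb B"
  have "(\<Sum>b\<in>B. (norm (M *v b))^2) = (\<Sum>b\<in>B. \<Sum>i\<in>UNIV. ((M$i) \<bullet> b)^2)"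
    by (simp only: norm2_mv)
  also have "\<dots> = (\<Sum>i\<in>UNIV. \<Sum>b\<in>B. ((M$i) \<bullet> b)^2)" by (rule sum.swap)
  also have "\<dots> = (\<Sum>i\<in>UNIV. (norm (M$i))^2)" using onb_norm2[OF B] by simp
  also have "\<dots> = (frob_norm M)^2" by (simp add: frob2 power2_norm_eq_inner)
  finally show ?thesis by simp
qed

lemma mv_frob: "norm (M *v x) \<le> frob_norm (M::real^'c^'r) * norm x"
proof -
  have "(norm (M *v x))^2 = (\<Sum>i\<in>UNIV. ((M$i) \<bullet> x)^2)"
    by (rule norm2_mv)
  also have "\<dots> \<le> (\<Sum>i\<in>UNIV. ((M$i) \<bullet> (M$i)) * (x \<bullet> x))"
  proof (rule sum_mono)
    fix i
    have "\<bar>M$i \<bullet> x\<bar> \<le> norm (M$i) * norm x" by (rule Cauchy_Schwarz_ineq2)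
    hence "(M$i \<bullet> x)^2 \<le> (norm (M$i) * norm x)^2"
      by (metis abs_ge_zero power2_abs power_mono)
    thus "(M$i \<bullet> x)^2 \<le> ((M$i) \<bullet> (M$i)) * (x \<bullet> x)"
      by (simp add: power_mult_distrib power2_norm_eq_inner)
  qed
  also have "\<dots> = (frob_norm M * norm x)^2"
    by (simp add: frob2 power_mult_distrib power2_norm_eq_inner sum_distrib_right)
  finally have "(norm (M *v x))^2 \<le> (frob_norm M * norm x)^2" .
  moreover have "0 \<le> frob_norm M * norm x" using frob_nonneg[of M] by simp
  ultimately show ?thesis by (rule power2_le_imp_le)
qed

lemma spec_le_frob: "spec_norm (M::real^'c^'r) \<le> frob_norm M"
  unfolding spec_norm_def by (rule onorm_le) (rule mv_frob)

definition mat_of :: "(real^'n) set \<Rightarrow> (real^'n \<Rightarrow> real) \<Rightarrow> real^'n^'n" where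
  "mat_of B f = (\<chi> i j. \<Sum>b\<in>B. f b * b$i * b$j)"

lemma mat_of_mv: "mat_of B f *v x = (\<Sum>b\<in>B. (f b * (b \<bullet> x)) *\<^sub>R b)"
proof -
  have "(mat_of B f *v x)$k = (\<Sum>b\<in>B. (f b * (b \<bullet> x)) *\<^sub>R b)$k" for k
  proof -
    have "(mat_of B f *v x)$k = (\<Sum>j\<in>UNIV. \<Sum>b\<in>B. f b * b$k * b$j * x$j)"
      by (simp add: matrix_vector_mult_def mat_of_def sum_distrib_right)
    also have "\<dots> = (\<Sum>b\<in>B. \<Sum>j\<in>UNIV. f b * b$k * b$j * x$j)" by (rule sum.swap)
    also have "\<dots> = (\<Sum>b\<in>B. (f b * (b \<bullet> x)) * b$k)"
      by (simp add: inner_vec_def sum_distrib_left sum_distrib_right mult_ac)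
    also have "\<dots> = (\<Sum>b\<in>B. (f b * (b \<bullet> x)) *\<^sub>R b)$k" by (simp add: sum_component)
    finally show ?thesis .
  qed
  thus ?thesis by (simp add: vec_eq_iff)
qed

lemma mat_of_sym: "sym_mat (mat_of B f)"
  unfolding sym_mat_def by (simp add: vec_eq_iff transpose_def mat_of_def mult_ac)

lemma mat_of_eig: "onb B \<Longrightarrow> c \<in> B \<Longrightarrow> mat_of B f *v c = f c *\<^sub>R c"
proof -
  assume B: "onb B" and c: "c \<in> B"
  have "mat_of B f *v c = (\<Sum>b\<in>B. if b = c then f c *\<^sub>R c else 0)"
    unfolding mat_of_mv
  proof (rule sum.cong)
    fix b assume "b \<in> B"
    thus "(f b * (b \<bullet> c)) *\<^sub>R b = (if b = c then f c *\<^sub>R c else 0)"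
      using onb_orth[OF B _ c] onb_self[OF B c] by auto
  qed simp
  also have "\<dots> = f c *\<^sub>R c" using c onb_finite[OF B] by simp
  finally show ?thesis .
qed

lemma mat_of_quad: "x \<bullet> (mat_of B f *v x) = (\<Sum>b\<in>B. f b * (x \<bullet> b)^2)"
  unfolding mat_of_mv by (simp add: inner_sum_right inner_commute power2_eq_square mult_ac)

lemma transpose_diff: "transpose (A - B) = transpose A - transpose (B::real^'n^'m)"
  by (simp add: vec_eq_iff transpose_def)

lemma transpose_add: "transpose (A + B) = transpose A + transpose (B::real^'n^'m)"
  by (simp add: vec_eq_iff transpose_def)

lemma eig_inner: "sym_mat M \<Longrightarrow> M *v c = l *\<^sub>R c \<Longrightarrow> (M *v x) \<bullet> c = l * (x \<bullet> c)"
  by (metis inner_mv_sym inner_scaleR_right)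

lemma psd_sym: "pos_semidef M \<Longrightarrow> sym_mat M" unfolding pos_semidef_def by blast
lemma psd_nonneg: "pos_semidef M \<Longrightarrow> x \<bullet> (M *v x) \<ge> 0" unfolding pos_semidef_def by blast

lemma msqrt_exists:
  fixes M :: "real^'n^'n"
  assumes psd: "pos_semidef M"
  shows "\<exists>S. pos_semidef S \<and> S ** S = M"
proof -
  obtain B where B: "onb B" and eig: "\<And>b. b\<in>B \<Longrightarrow> M *v b = (b \<bullet> (M *v b)) *\<^sub>R b"
    using spectral_onb[OF psd_sym[OF psd]] by blast
  define ev where "ev b = b \<bullet> (M *v b)" for b
  define S where "S = mat_of B (\<lambda>b. sqrt (ev b))"
  have ev0: "ev b \<ge> 0" for b using psd_nonneg[OF psd] by (simp add: ev_def)
  have Seig: "c \<in> B \<Longrightarrow> S *v c = sqrt (ev c) *\<^sub>R c" for c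
    unfolding S_def by (rule mat_of_eig[OF B])
  have Ssym: "sym_mat S" unfolding S_def by (rule mat_of_sym)
  have "pos_semidef S"
    unfolding pos_semidef_def
  proof (intro conjI allI Ssym)
    fix x
    show "x \<bullet> (S *v x) \<ge> 0" unfolding S_def mat_of_quad
      by (intro sum_nonneg mult_nonneg_nonneg real_sqrt_ge_zero ev0 zero_le_power2)
  qed
  moreover have "S ** S = M"
  proof -
    have "(S ** S) *v x = M *v x" for x
    proof (rule onb_eq[OF B])
      fix c assume c: "c \<in> B"
      have "((S ** S) *v x) \<bullet> c = (S *v (S *v x)) \<bullet> c" by (simp add: matrix_vector_mul_assoc)
      also have "\<dots> = sqrt (ev c) * ((S *v x) \<bullet> c)" by (rule eig_inner[OF Ssym Seig[OF c]])
      also have "\<dots> = sqrt (ev c) * (sqrt (ev c) * (x \<bullet> c))" using eig_inner[OF Ssym Seig[OF c]] by simp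
      also have "\<dots> = ev c * (x \<bullet> c)" using ev0[of c] by (simp add: mult.assoc[symmetric])
      also have "\<dots> = (M *v x) \<bullet> c" using eig_inner[OF psd_sym[OF psd] eig[OF c]] by (simp add: ev_def)
      finally show "((S ** S) *v x) \<bullet> c = (M *v x) \<bullet> c" .
    qed
    thus ?thesis by (simp add: matrix_eq)
  qed
  ultimately show ?thesis by blast
qed

lemma pair_eig:
  fixes X Y :: "real^'n^'n"
  assumes "X *v c = Y *v c + m *\<^sub>R c" and "c \<bullet> c = 1" and "sym_mat X" "sym_mat Y"
  shows "c \<bullet> ((X ** X - Y ** Y) *v c) = m * (c \<bullet> (X *v c) + c \<bullet> (Y *v c))"
    and "m = c \<bullet> (X *v c) - c \<bullet> (Y *v c)"
proof -
  have "c \<bullet> ((X ** X - Y ** Y) *v c) = c \<bullet> (X *v (X *v c)) - c \<bullet> (Y *v (Y *v c))"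
    by (simp add: matrix_vector_mult_diff_rdistrib matrix_vector_mul_assoc inner_diff_right)
  also have "\<dots> = (X *v c) \<bullet> (X *v c) - (Y *v c) \<bullet> (Y *v c)"
    using inner_mv_sym[OF assms(3)] inner_mv_sym[OF assms(4)] by simp
  also have "\<dots> = 2 * m * (c \<bullet> (Y *v c)) + m * m"
    using assms(1,2) by (simp add: inner_add_left inner_add_right inner_commute algebra_simps)
  finally have 1: "c \<bullet> ((X ** X - Y ** Y) *v c) = 2 * m * (c \<bullet> (Y *v c)) + m * m" .
  show 2: "m = c \<bullet> (X *v c) - c \<bullet> (Y *v c)"
    using assms(1,2) by (simp add: inner_add_right)
  show "c \<bullet> ((X ** X - Y ** Y) *v c) = m * (c \<bullet> (X *v c) + c \<bullet> (Y *v c))"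
  proof -
    have g: "\<And>p q. m = p - q \<Longrightarrow> 2 * m * q + m * m = m * (p + q)" by (simp add: algebra_simps, simp add: distrib_right[symmetric])
    show ?thesis unfolding 1 by (rule g[OF 2])
  qed
qed

lemma diff_eig:
  fixes X Y :: "real^'n^'n"
  assumes "(X - Y) *v c = m *\<^sub>R c"
  shows "X *v c = Y *v c + m *\<^sub>R c"
  using assms by (simp add: matrix_vector_mult_diff_rdistrib algebra_simps)

lemma sym_diff: "sym_mat X \<Longrightarrow> sym_mat Y \<Longrightarrow> sym_mat (X - Y)"
  unfolding sym_mat_def by (simp add: transpose_diff)

lemma psd_unique:
  fixes S T :: "real^'n^'n"
  assumes S: "pos_semidef S" and T: "pos_semidef T" and eq: "S ** S = T ** T"
  shows "S = T"
proof -
  have sE: "sym_mat (S - T)" by (intro sym_diff psd_sym S T)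
  obtain B where B: "onb B" and eig: "\<And>b. b\<in>B \<Longrightarrow> (S - T) *v b = (b \<bullet> ((S - T) *v b)) *\<^sub>R b"
    using spectral_onb[OF sE] by blast
  have zero: "b \<bullet> ((S - T) *v b) = 0" if b: "b \<in> B" for b
  proof -
    define m where "m = b \<bullet> ((S - T) *v b)"
    have h: "S *v b = T *v b + m *\<^sub>R b" using diff_eig eig[OF b] m_def by metis
    note pe = pair_eig[OF h onb_self[OF B b] psd_sym[OF S] psd_sym[OF T]]
    have "m * (b \<bullet> (S *v b) + b \<bullet> (T *v b)) = 0" using pe(1) eq by simp
    moreover have "b \<bullet> (S *v b) \<ge> 0" "b \<bullet> (T *v b) \<ge> 0" using psd_nonneg S T by auto
    ultimately have "m = 0" using pe(2) by (smt (verit) mult_eq_0_iff)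
    thus ?thesis by (simp add: m_def)
  qed
  have "S *v x = T *v x" for x
  proof -
    have "(S - T) *v x = 0"
    proof (rule onb_eq[OF B])
      fix c assume c: "c \<in> B"
      show "((S - T) *v x) \<bullet> c = 0 \<bullet> c"
        using eig_inner[OF sE eig[OF c], of x] zero[OF c] by simp
    qed
    thus ?thesis by (simp add: matrix_vector_mult_diff_rdistrib)
  qed
  thus ?thesis by (simp add: matrix_eq)
qed

lemma msqrt:
  fixes M :: "real^'n^'n"
  assumes "pos_semidef M"
  shows "pos_semidef (msqrt M)" "msqrt M ** msqrt M = M"
proof -
  have "\<exists>!S. pos_semidef S \<and> S ** S = M"
    using msqrt_exists[OF assms] psd_unique by metis
  hence "pos_semidef (msqrt M) \<and> msqrt M ** msqrt M = M"
    unfolding msqrt_def by (rule theI')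
  thus "pos_semidef (msqrt M)" "msqrt M ** msqrt M = M" by auto
qed

lemma lmin:
  fixes X :: "real^'n^'n"
  assumes X: "pos_semidef X" and inj: "\<And>v. X *v v = 0 \<Longrightarrow> v = 0"
  shows "lambda_min (X ** X) > 0"
    and "\<And>b. norm b = 1 \<Longrightarrow> b \<bullet> (X *v b) \<ge> sqrt (lambda_min (X ** X))"
proof -
  have sX: "sym_mat X" by (rule psd_sym[OF X])
  obtain C where C: "onb C" and Ceig: "\<And>b. b\<in>C \<Longrightarrow> X *v b = (b \<bullet> (X *v b)) *\<^sub>R b"
    using spectral_onb[OF sX] by blast
  define nu where "nu c = c \<bullet> (X *v c)" for c
  have nu0: "nu c \<ge> 0" for c using psd_nonneg[OF X] by (simp add: nu_def)
  have Ceig': "c \<in> C \<Longrightarrow> X *v c = nu c *\<^sub>R c" for c using Ceig by (simp add: nu_def)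
  have XX: "((X ** X) *v v) \<bullet> c = (nu c)^2 * (v \<bullet> c)" if c: "c \<in> C" for v c
  proof -
    have "((X ** X) *v v) \<bullet> c = (X *v (X *v v)) \<bullet> c" by (simp add: matrix_vector_mul_assoc)
    also have "\<dots> = nu c * ((X *v v) \<bullet> c)" by (rule eig_inner[OF sX Ceig'[OF c]])
    also have "\<dots> = nu c * (nu c * (v \<bullet> c))" using eig_inner[OF sX Ceig'[OF c]] by simp
    finally show ?thesis by (simp add: power2_eq_square)
  qed
  define Ev where "Ev = {l. \<exists>v. v \<noteq> 0 \<and> (X ** X) *v v = l *\<^sub>R v}"
  have sub: "Ev \<subseteq> (\<lambda>c. (nu c)^2) ` C"
  proof
    fix l assume "l \<in> Ev"
    then obtain v where v: "v \<noteq> 0" "(X ** X) *v v = l *\<^sub>R v" by (auto simp: Ev_def)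
    have "\<exists>c\<in>C. v \<bullet> c \<noteq> 0"
    proof (rule ccontr)
      assume "\<not> ?thesis"
      hence "v = 0" by (intro onb_eq[OF C]) simp
      thus False using v by simp
    qed
    then obtain c where c: "c \<in> C" "v \<bullet> c \<noteq> 0" by blast
    have "l * (v \<bullet> c) = (nu c)^2 * (v \<bullet> c)" using XX[OF c(1), of v] v(2) by simp
    hence "l = (nu c)^2" using c(2) by simp
    thus "l \<in> (\<lambda>c. (nu c)^2) ` C" using c(1) by blast
  qed
  have fin: "finite Ev" using finite_subset[OF sub] onb_finite[OF C] by blast
  have mem: "(nu c)^2 \<in> Ev" if c: "c \<in> C" for c
  proof -
    have "c \<noteq> 0" using onb_unit[OF C c] by auto
    moreover have "(X ** X) *v c = (nu c)^2 *\<^sub>R c"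
      by (simp add: matrix_vector_mul_assoc[symmetric] Ceig'[OF c] matrix_vector_mult_scaleR power2_eq_square)
    ultimately show ?thesis unfolding Ev_def by blast
  qed
  have "C \<noteq> {}" using onb_card[OF C] by auto
  hence ne: "Ev \<noteq> {}" using mem by blast
  have LE: "lambda_min (X ** X) = Min Ev" by (simp add: lambda_min_def Ev_def)
  have "Min Ev \<in> Ev" using Min_in[OF fin ne] .
  then obtain c0 where c0: "c0 \<in> C" "Min Ev = (nu c0)^2" using sub by blast
  have "nu c0 \<noteq> 0"
  proof
    assume "nu c0 = 0"
    hence "X *v c0 = 0" using Ceig'[OF c0(1)] by simp
    hence "c0 = 0" by (rule inj)
    thus False using onb_unit[OF C c0(1)] by simp
  qed
  thus Lpos: "lambda_min (X ** X) > 0" using LE c0(2) by simp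
  have nuL: "sqrt (lambda_min (X ** X)) \<le> nu c" if c: "c \<in> C" for c
  proof -
    have "lambda_min (X ** X) \<le> (nu c)^2" using LE Min_le[OF fin mem[OF c]] by simp
    hence "sqrt (lambda_min (X ** X)) \<le> sqrt ((nu c)^2)" by (rule real_sqrt_le_mono)
    thus ?thesis using nu0[of c] by simp
  qed
  fix b :: "real^'n" assume nb: "norm b = 1"
  have "b \<bullet> (X *v b) = (\<Sum>c\<in>C. (b \<bullet> c) * ((X *v b) \<bullet> c))" by (rule onb_inner[OF C])
  also have "\<dots> = (\<Sum>c\<in>C. nu c * (b \<bullet> c)^2)"
    by (intro sum.cong refl) (simp add: eig_inner[OF sX Ceig'] power2_eq_square)
  also have "\<dots> \<ge> (\<Sum>c\<in>C. sqrt (lambda_min (X ** X)) * (b \<bullet> c)^2)"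
    by (intro sum_mono mult_right_mono nuL zero_le_power2)
  also have "(\<Sum>c\<in>C. sqrt (lambda_min (X ** X)) * (b \<bullet> c)^2) = sqrt (lambda_min (X ** X))"
    using onb_norm2[OF C, of b] nb by (simp add: sum_distrib_left[symmetric])
  finally show "b \<bullet> (X *v b) \<ge> sqrt (lambda_min (X ** X))" .
qed

lemma core:
  fixes X Y :: "real^'n^'n"
  assumes X: "pos_semidef X" and Y: "pos_semidef Y" and inj: "\<And>v. X *v v = 0 \<Longrightarrow> v = 0"
  shows "frob_norm (X - Y) \<le> sqrt (sqrt (real CARD('n)) * frob_norm (X ** X - Y ** Y))"
    and "spec_norm (X - Y) \<le> frob_norm (X ** X - Y ** Y) / sqrt (lambda_min (X ** X))"
proof -
  define E where "E = X - Y"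
  define D where "D = X ** X - Y ** Y"
  have sX: "sym_mat X" and sY: "sym_mat Y" using psd_sym X Y by auto
  have sE: "sym_mat E" unfolding E_def by (rule sym_diff[OF sX sY])
  obtain B where B: "onb B" and eig: "\<And>b. b\<in>B \<Longrightarrow> E *v b = (b \<bullet> (E *v b)) *\<^sub>R b"
    using spectral_onb[OF sE] by blast
  define mu where "mu b = b \<bullet> (E *v b)" for b
  have eig': "b \<in> B \<Longrightarrow> E *v b = mu b *\<^sub>R b" for b using eig by (simp add: mu_def)
  have pe: "mu b * (b \<bullet> (X *v b) + b \<bullet> (Y *v b)) = b \<bullet> (D *v b)"
           "mu b = b \<bullet> (X *v b) - b \<bullet> (Y *v b)" if b: "b \<in> B" for b
  proof -
    have h: "X *v b = Y *v b + mu b *\<^sub>R b" using diff_eig eig'[OF b] E_def by metis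
    note p = pair_eig[OF h onb_self[OF B b] sX sY]
    show "mu b * (b \<bullet> (X *v b) + b \<bullet> (Y *v b)) = b \<bullet> (D *v b)" using p(1) by (simp add: D_def)
    show "mu b = b \<bullet> (X *v b) - b \<bullet> (Y *v b)" by (rule p(2))
  qed
  have pq0: "b \<bullet> (X *v b) \<ge> 0" "b \<bullet> (Y *v b) \<ge> 0" for b using psd_nonneg X Y by auto
  have Db: "\<bar>b \<bullet> (D *v b)\<bar> \<le> norm (D *v b)" if b: "b \<in> B" for b
    using Cauchy_Schwarz_ineq2[of b "D *v b"] onb_unit[OF B b] by simp
  have Dbf: "norm (D *v b) \<le> frob_norm D" if b: "b \<in> B" for b
    using mv_frob[of D b] onb_unit[OF B b] by simp
  have mu2: "(mu b)^2 \<le> \<bar>b \<bullet> (D *v b)\<bar>" if b: "b \<in> B" for b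
  proof -
    have "(mu b)^2 = \<bar>mu b\<bar> * \<bar>b \<bullet> (X *v b) - b \<bullet> (Y *v b)\<bar>"
      using pe(2)[OF b] by (simp add: power2_eq_square abs_mult[symmetric])
    also have "\<dots> \<le> \<bar>mu b\<bar> * (b \<bullet> (X *v b) + b \<bullet> (Y *v b))"
      using pq0[of b] by (intro mult_left_mono) auto
    also have "\<dots> = \<bar>b \<bullet> (D *v b)\<bar>" 
    proof -
      have "b \<bullet> (X *v b) + b \<bullet> (Y *v b) \<ge> 0" using pq0[of b] by simp
      hence "\<bar>mu b * (b \<bullet> (X *v b) + b \<bullet> (Y *v b))\<bar> = \<bar>mu b\<bar> * (b \<bullet> (X *v b) + b \<bullet> (Y *v b))"
        by (simp add: abs_mult)
      thus ?thesis using pe(1)[OF b] by simp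
    qed
    finally show ?thesis .
  qed
  have finB: "finite B" and cardB: "card B = CARD('n)" using onb_finite[OF B] onb_card[OF B] by auto
  have "(frob_norm E)^2 = (\<Sum>b\<in>B. (norm (E *v b))^2)" by (rule frob_onb[OF B])
  also have "\<dots> = (\<Sum>b\<in>B. (mu b)^2)"
    by (intro sum.cong refl) (simp add: eig' onb_unit[OF B] power2_abs)
  also have "\<dots> \<le> (\<Sum>b\<in>B. norm (D *v b))"
    by (intro sum_mono order_trans[OF mu2 Db])
  also have "\<dots> \<le> sqrt (real CARD('n)) * frob_norm D"
  proof -
    have "(\<Sum>b\<in>B. norm (D *v b))^2 \<le> (\<Sum>b\<in>B. (norm (D *v b))^2) * real (card B)"
      by (rule sum_squared_le_sum_of_squares)
    also have "\<dots> = (sqrt (real CARD('n)) * frob_norm D)^2"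
      using frob_onb[OF B, of D] cardB by (simp add: power_mult_distrib)
    finally have "(\<Sum>b\<in>B. norm (D *v b))^2 \<le> (sqrt (real CARD('n)) * frob_norm D)^2" .
    moreover have "0 \<le> sqrt (real CARD('n)) * frob_norm D" using frob_nonneg[of D] by simp
    ultimately show ?thesis by (rule power2_le_imp_le)
  qed
  finally have "(frob_norm E)^2 \<le> sqrt (real CARD('n)) * frob_norm D" .
  thus "frob_norm (X - Y) \<le> sqrt (sqrt (real CARD('n)) * frob_norm (X ** X - Y ** Y))"
    unfolding E_def D_def by (rule real_le_rsqrt)
  define L where "L = lambda_min (X ** X)"
  have Lpos: "L > 0" unfolding L_def by (rule lmin(1)[OF X inj])
  define K where "K = frob_norm D / sqrt L"
  have K0: "K \<ge> 0" unfolding K_def using frob_nonneg[of D] Lpos by simp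
  have muK: "\<bar>mu b\<bar> \<le> K" if b: "b \<in> B" for b
  proof -
    have "\<bar>mu b\<bar> * sqrt L \<le> \<bar>mu b\<bar> * (b \<bullet> (X *v b) + b \<bullet> (Y *v b))"
      using lmin(2)[OF X inj onb_unit[OF B b]] pq0[of b] unfolding L_def
      by (intro mult_left_mono) auto
    also have "\<dots> = \<bar>b \<bullet> (D *v b)\<bar>" 
    proof -
      have "b \<bullet> (X *v b) + b \<bullet> (Y *v b) \<ge> 0" using pq0[of b] by simp
      hence "\<bar>mu b * (b \<bullet> (X *v b) + b \<bullet> (Y *v b))\<bar> = \<bar>mu b\<bar> * (b \<bullet> (X *v b) + b \<bullet> (Y *v b))"
        by (simp add: abs_mult)
      thus ?thesis using pe(1)[OF b] by simp
    qed
    also have "\<dots> \<le> frob_norm D" using Db[OF b] Dbf[OF b] by linarith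
    finally have "\<bar>mu b\<bar> * sqrt L \<le> frob_norm D" .
    thus ?thesis unfolding K_def using Lpos by (simp add: pos_le_divide_eq)
  qed
  have "norm (E *v x) \<le> K * norm x" for x
  proof -
    have "(norm (E *v x))^2 = (\<Sum>b\<in>B. ((E *v x) \<bullet> b)^2)" by (rule onb_norm2[OF B])
    also have "\<dots> = (\<Sum>b\<in>B. (mu b)^2 * (x \<bullet> b)^2)"
      by (intro sum.cong refl) (simp add: eig_inner[OF sE eig'] power_mult_distrib)
    also have "\<dots> \<le> (\<Sum>b\<in>B. K^2 * (x \<bullet> b)^2)"
    proof (intro sum_mono mult_right_mono zero_le_power2)
      fix b assume "b \<in> B"
      hence "\<bar>mu b\<bar> \<le> K" by (rule muK)
      thus "(mu b)^2 \<le> K^2" by (metis abs_ge_zero power2_abs power_mono)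
    qed
    also have "\<dots> = (K * norm x)^2"
      using onb_norm2[OF B, of x] by (simp add: power_mult_distrib sum_distrib_left)
    finally have "(norm (E *v x))^2 \<le> (K * norm x)^2" .
    moreover have "0 \<le> K * norm x" using K0 by simp
    ultimately show ?thesis by (rule power2_le_imp_le)
  qed
  hence "spec_norm E \<le> K" unfolding spec_norm_def by (intro onorm_le)
  thus "spec_norm (X - Y) \<le> frob_norm (X ** X - Y ** Y) / sqrt (lambda_min (X ** X))"
    unfolding E_def K_def D_def L_def .
qed

lemma inv_props:
  fixes M :: "real^'n^'n"
  assumes "invertible M"
  shows "M ** matrix_inv M = mat 1" "matrix_inv M ** M = mat 1"
proof -
  have "M ** matrix_inv M = mat 1 \<and> matrix_inv M ** M = mat 1"
    using assms unfolding matrix_inv_def invertible_def by (rule someI_ex)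
  thus "M ** matrix_inv M = mat 1" "matrix_inv M ** M = mat 1" by auto
qed

lemma inv_unique:
  fixes M N :: "real^'n^'n"
  assumes "M ** N = mat 1"
  shows "matrix_inv M = N"
proof -
  have inv: "invertible M" using assms invertible_right_inverse by blast
  have "matrix_inv M = matrix_inv M ** (M ** N)" using assms by simp
  also have "\<dots> = (matrix_inv M ** M) ** N" by (simp add: matrix_mul_assoc)
  also have "\<dots> = N" using inv_props(2)[OF inv] by simp
  finally show ?thesis .
qed

lemma inj_invertible:
  fixes M :: "real^'n^'n"
  assumes "\<And>v. M *v v = 0 \<Longrightarrow> v = 0"
  shows "invertible M"
  using assms matrix_left_invertible_ker[of M] invertible_left_inverse by blast

lemma pd_inj: "pos_def M \<Longrightarrow> M *v v = 0 \<Longrightarrow> v = 0"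
  unfolding pos_def_def by force

lemma pd_psd: "pos_def M \<Longrightarrow> pos_semidef M"
  unfolding pos_def_def pos_semidef_def by (metis inner_zero_left order_refl less_imp_le)

lemma pd_invertible: "pos_def (M::real^'n^'n) \<Longrightarrow> invertible M"
  by (intro inj_invertible) (rule pd_inj)

lemma inv_transpose:
  fixes M :: "real^'n^'n"
  assumes "invertible M"
  shows "transpose (matrix_inv M) = matrix_inv (transpose M)"
proof -
  have "transpose M ** transpose (matrix_inv M) = mat 1"
    using inv_props(2)[OF assms] by (metis matrix_transpose_mul transpose_mat)
  thus ?thesis by (rule inv_unique[symmetric])
qed

lemma inv_sym: "invertible M \<Longrightarrow> sym_mat M \<Longrightarrow> sym_mat (matrix_inv (M::real^'n^'n))"
  unfolding sym_mat_def using inv_transpose by metis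

lemma inv_mv: "invertible (M::real^'n^'n) \<Longrightarrow> M *v (matrix_inv M *v x) = x"
  using inv_props(1) by (metis matrix_vector_mul_assoc matrix_vector_mul_lid)

lemma inv_mv2: "invertible (M::real^'n^'n) \<Longrightarrow> matrix_inv M *v (M *v x) = x"
  using inv_props(2) by (metis matrix_vector_mul_assoc matrix_vector_mul_lid)

lemma inv_psd:
  fixes M :: "real^'n^'n"
  assumes "invertible M" "pos_semidef M"
  shows "pos_semidef (matrix_inv M)"
  unfolding pos_semidef_def
proof (intro conjI allI)
  show "sym_mat (matrix_inv M)" using inv_sym assms psd_sym by blast
  fix x
  define y where "y = matrix_inv M *v x"
  have "x = M *v y" using inv_mv[OF assms(1)] y_def by simp
  hence "x \<bullet> (matrix_inv M *v x) = (M *v y) \<bullet> y" using y_def by simp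
  also have "\<dots> = y \<bullet> (M *v y)" by (simp add: inner_commute)
  finally show "x \<bullet> (matrix_inv M *v x) \<ge> 0" using psd_nonneg[OF assms(2)] by simp
qed

lemma inv_inj: "invertible (M::real^'n^'n) \<Longrightarrow> matrix_inv M *v v = 0 \<Longrightarrow> v = 0"
  by (metis inv_mv matrix_vector_mult_0_right)

lemma inv_sq:
  fixes S :: "real^'n^'n"
  assumes "invertible S"
  shows "matrix_inv S ** matrix_inv S = matrix_inv (S ** S)"
proof -
  have "(S ** S) ** (matrix_inv S ** matrix_inv S) = S ** ((S ** matrix_inv S) ** matrix_inv S)"
    by (simp add: matrix_mul_assoc)
  also have "\<dots> = mat 1" using inv_props(1)[OF assms] by simp
  finally show ?thesis by (rule inv_unique[symmetric])
qed

lemma sqrt_invertible: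
  fixes S M :: "real^'n^'n"
  assumes "S ** S = M" "invertible M"
  shows "invertible S"
proof -
  have "S ** (S ** matrix_inv M) = mat 1"
    using assms inv_props(1)[OF assms(2)] by (simp add: matrix_mul_assoc)
  thus ?thesis using invertible_right_inverse by blast
qed

lemma frob_uminus: "frob_norm (- M) = frob_norm M"
  unfolding frob_norm_def by simp

lemma woodbury:
  fixes A :: "real^'n^'n" and Z :: "real^'k^'n" and \<alpha> :: real
  defines "Mk \<equiv> mat 1 + \<alpha> *\<^sub>R (transpose Z ** matrix_inv A ** Z)"
  assumes iA: "invertible A" and iM: "invertible Mk"
  shows "matrix_inv (A + \<alpha> *\<^sub>R (Z ** transpose Z))
       = matrix_inv A - \<alpha> *\<^sub>R (matrix_inv A ** Z ** matrix_inv Mk ** transpose Z ** matrix_inv A)"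
proof (rule inv_unique, rule matrix_eq[THEN iffD2], rule allI)
  fix x :: "real^'n"
  define Ai where "Ai = matrix_inv A"
  define Mi where "Mi = matrix_inv Mk"
  define u where "u = Ai *v x"
  define w where "w = Mi *v (transpose Z *v u)"
  define q where "q = transpose Z *v (Ai *v (Z *v w))"
  have Mkw: "Mk *v w = w + \<alpha> *\<^sub>R q"
    by (simp add: Mk_def q_def Ai_def matrix_vector_mult_add_rdistrib mv_scaleR matrix_vector_mul_assoc[symmetric])
  have "Mk *v w = transpose Z *v u" unfolding w_def Mi_def by (rule inv_mv[OF iM])
  hence e1: "transpose Z *v u = w + \<alpha> *\<^sub>R q" using Mkw by simp
  have Au: "A *v u = x" unfolding u_def Ai_def by (rule inv_mv[OF iA])
  have Aq: "A *v (Ai *v (Z *v w)) = Z *v w" unfolding Ai_def by (rule inv_mv[OF iA])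
  have Wx: "(Ai - \<alpha> *\<^sub>R (Ai ** Z ** Mi ** transpose Z ** Ai)) *v x = u - \<alpha> *\<^sub>R (Ai *v (Z *v w))"
    by (simp add: u_def w_def matrix_vector_mult_diff_rdistrib mv_scaleR matrix_vector_mul_assoc[symmetric])
  have "((A + \<alpha> *\<^sub>R (Z ** transpose Z)) ** (Ai - \<alpha> *\<^sub>R (Ai ** Z ** Mi ** transpose Z ** Ai))) *v x
      = (A + \<alpha> *\<^sub>R (Z ** transpose Z)) *v (u - \<alpha> *\<^sub>R (Ai *v (Z *v w)))"
    by (simp add: matrix_vector_mul_assoc[symmetric] Wx)
  also have "\<dots> = A *v u - \<alpha> *\<^sub>R (A *v (Ai *v (Z *v w))) + \<alpha> *\<^sub>R (Z *v (transpose Z *v u))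
      - (\<alpha> * \<alpha>) *\<^sub>R (Z *v q)"
    by (simp add: q_def matrix_vector_mult_add_rdistrib mv_scaleR matrix_vector_mul_assoc[symmetric]
        matrix_vector_mult_diff_distrib matrix_vector_mult_scaleR algebra_simps)
  also have "\<dots> = x"
    unfolding Au Aq e1 by (simp add: matrix_vector_right_distrib matrix_vector_mult_scaleR algebra_simps)
  finally show "((A + \<alpha> *\<^sub>R (Z ** transpose Z)) ** (matrix_inv A - \<alpha> *\<^sub>R (matrix_inv A ** Z ** matrix_inv Mk ** transpose Z ** matrix_inv A))) *v x
      = mat 1 *v x" by (simp add: Ai_def Mi_def)
qed

lemma Mk_pd:
  fixes A :: "real^'n^'n" and Z :: "real^'k^'n"
  assumes pdA: "pos_def A" and pdP: "pos_def (A + \<alpha> *\<^sub>R (Z ** transpose Z))"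
    and alpha: "\<alpha> = 1 \<or> \<alpha> = -1"
  shows "pos_def (mat 1 + \<alpha> *\<^sub>R (transpose Z ** matrix_inv A ** Z))"
proof -
  define Ai where "Ai = matrix_inv A"
  have iA: "invertible A" by (rule pd_invertible[OF pdA])
  have psdAi: "pos_semidef Ai" unfolding Ai_def by (rule inv_psd[OF iA pd_psd[OF pdA]])
  have symAi: "transpose Ai = Ai" using psd_sym[OF psdAi] by (simp add: sym_mat_def)
  have sym: "sym_mat (mat 1 + \<alpha> *\<^sub>R (transpose Z ** Ai ** Z))"
    unfolding sym_mat_def
    by (simp add: transpose_add transpose_scalar transpose_mat matrix_transpose_mul symAi matrix_mul_assoc)
  have pos: "y \<bullet> ((mat 1 + \<alpha> *\<^sub>R (transpose Z ** Ai ** Z)) *v y) > 0" if y0: "y \<noteq> 0" for y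
  proof -
    define u where "u = Z *v y"
    define w where "w = Ai *v u"
    define s where "s = u \<bullet> w"
    have ZT: "v \<bullet> (transpose Z *v t) = (Z *v v) \<bullet> t" for v t
      by (metis dot_lmul_matrix inner_commute transpose_matrix_vector)
    have ZT': "v \<bullet> (t v* Z) = (Z *v v) \<bullet> t" for v t
      by (metis dot_lmul_matrix inner_commute)
    have q: "y \<bullet> ((mat 1 + \<alpha> *\<^sub>R (transpose Z ** Ai ** Z)) *v y) = y \<bullet> y + \<alpha> * s"
      by (simp add: matrix_vector_mult_add_rdistrib mv_scaleR matrix_vector_mul_assoc[symmetric]
          inner_add_right ZT ZT' s_def u_def w_def)
    have yy: "y \<bullet> y > 0" using y0 by simp
    have s0: "s \<ge> 0" using psd_nonneg[OF psdAi, of u] by (simp add: s_def w_def)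
    show ?thesis using alpha
    proof
      assume "\<alpha> = 1" hence "\<alpha> * s = s" by simp
      thus ?thesis using q yy s0 by linarith
    next
      assume am: "\<alpha> = -1"
      show ?thesis
      proof (cases "u = 0")
        case True
        hence "s = 0" by (simp add: s_def)
        thus ?thesis using q yy by simp
      next
        case False
        have Aw: "A *v w = u" unfolding w_def Ai_def by (rule inv_mv[OF iA])
        have "w \<noteq> 0" using Aw False by auto
        hence "w \<bullet> ((A + \<alpha> *\<^sub>R (Z ** transpose Z)) *v w) > 0"
          using pdP unfolding pos_def_def by blast
        moreover have "w \<bullet> ((A + \<alpha> *\<^sub>R (Z ** transpose Z)) *v w) = s - (transpose Z *v w) \<bullet> (transpose Z *v w)"
        proof -
          have "(A + \<alpha> *\<^sub>R (Z ** transpose Z)) *v w = u - Z *v (transpose Z *v w)"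
            using am Aw by (simp add: matrix_vector_mult_add_rdistrib matrix_vector_mult_diff_rdistrib mv_scaleR matrix_vector_mul_assoc[symmetric])
          moreover have "w \<bullet> (Z *v (transpose Z *v w)) = (transpose Z *v w) \<bullet> (transpose Z *v w)"
            by (metis dot_lmul_matrix transpose_matrix_vector)
          ultimately show ?thesis by (simp add: inner_diff_right s_def inner_commute)
        qed
        ultimately have lt: "(norm (transpose Z *v w))^2 < s" by (simp add: power2_norm_eq_inner)
        have "s = y \<bullet> (transpose Z *v w)" unfolding s_def u_def by (rule ZT[symmetric])
        also have "\<dots> \<le> norm y * norm (transpose Z *v w)" by (rule norm_cauchy_schwarz)
        finally have sle: "s \<le> norm y * norm (transpose Z *v w)" .
        have spos: "s > 0" using lt zero_le_power2[of "norm (transpose Z *v w)"] by linarith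
        have "s * s \<le> (norm y * norm (transpose Z *v w)) * (norm y * norm (transpose Z *v w))"
          using sle spos by (intro mult_mono) auto
        also have "\<dots> = (norm y)^2 * (norm (transpose Z *v w))^2" by (simp add: power2_eq_square)
        finally have "s * s \<le> (norm y)^2 * (norm (transpose Z *v w))^2" .
        also have "\<dots> < (norm y)^2 * s" using lt yy by (simp add: power2_norm_eq_inner)
        finally have "s < (norm y)^2" using spos by simp
        thus ?thesis using q am by (simp add: power2_norm_eq_inner)
      qed
    qed
  qed
  show ?thesis unfolding pos_def_def Ai_def[symmetric] using sym pos by blast
qed

theorem corollary7:
  fixes A :: "real^'n^'n" and Z :: "real^'k^'n" and \<alpha> \<beta> :: real
    and V :: "real^'k^'n" and Ct :: "real^'n^'n" and R :: "real^'n^'n \<Rightarrow> real^'n^'n"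
  assumes symA: "sym_mat A"
    and alpha: "\<alpha> = 1 \<or> \<alpha> = -1"
    and beta: "\<beta> = 1 \<or> \<beta> = -1"
    and pdA: "pos_def A"
    and pdAZ: "pos_def (A + \<alpha> *\<^sub>R (Z ** transpose Z))"
    and V_def: "V = (if \<beta> = 1 then Z
        else matrix_inv A ** Z **
          matrix_inv (msqrt (mat 1 + \<alpha> *\<^sub>R (transpose Z ** matrix_inv A ** Z))))"
    and R_def: "\<And>C. R C = V ** transpose V - mpow_half \<beta> A ** C - C ** mpow_half \<beta> A
                          - (\<alpha> * \<beta>) *\<^sub>R (C ** C)"
    and psdC: "pos_semidef Ct"
    and pdC: "pos_def (mpow_half \<beta> A + (\<alpha> * \<beta>) *\<^sub>R Ct)"
  shows "frob_norm (mpow_half \<beta> (A + \<alpha> *\<^sub>R (Z ** transpose Z)) - (mpow_half \<beta> A + (\<alpha> * \<beta>) *\<^sub>R Ct))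
           \<le> sqrt (sqrt (real CARD('n)) * frob_norm (R Ct))
         \<and> spec_norm (mpow_half \<beta> (A + \<alpha> *\<^sub>R (Z ** transpose Z)) - (mpow_half \<beta> A + (\<alpha> * \<beta>) *\<^sub>R Ct))
           \<le> min (frob_norm (R Ct) / sqrt (lambda_min (mpow \<beta> (A + \<alpha> *\<^sub>R (Z ** transpose Z)))))
                 (sqrt (sqrt (real CARD('n)) * frob_norm (R Ct)))"
proof -
  define P where "P = A + \<alpha> *\<^sub>R (Z ** transpose Z)"
  have a2: "\<alpha> * \<alpha> = 1" using alpha by auto
  have aa: "\<alpha> *\<^sub>R \<alpha> *\<^sub>R v = v" for v :: "real^'n"
    using a2 by simp
  define X where "X = mpow_half \<beta> P"
  define Y where "Y = mpow_half \<beta> A + (\<alpha> * \<beta>) *\<^sub>R Ct"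
  have psdY: "pos_semidef Y" unfolding Y_def by (rule pd_psd[OF pdC])
  have pdP: "pos_def P" using pdAZ by (simp add: P_def)
  have psdP: "pos_semidef P" by (rule pd_psd[OF pdP])
  have iP: "invertible P" by (rule pd_invertible[OF pdP])
  have psdA: "pos_semidef A" by (rule pd_psd[OF pdA])
  have iA: "invertible A" by (rule pd_invertible[OF pdA])
  note sP = msqrt[OF psdP]
  note sA = msqrt[OF psdA]
  have main: "pos_semidef X \<and> (\<forall>v. X *v v = 0 \<longrightarrow> v = 0) \<and> X ** X = mpow \<beta> P
      \<and> frob_norm (X ** X - Y ** Y) = frob_norm (R Ct)"
    using beta
  proof
    assume b1: "\<beta> = 1"
    have X: "X = msqrt P" by (simp add: X_def mpow_half_def b1)
    have inj: "\<forall>v. X *v v = 0 \<longrightarrow> v = 0"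
    proof (intro allI impI)
      fix v assume "X *v v = 0"
      hence "P *v v = 0" using sP(2) X by (metis matrix_vector_mul_assoc matrix_vector_mult_0_right)
      thus "v = 0" by (rule pd_inj[OF pdP])
    qed
    define T where "T = msqrt A"
    have Y: "Y = T + \<alpha> *\<^sub>R Ct" by (simp add: Y_def mpow_half_def b1 T_def)
    have RC: "R Ct = Z ** transpose Z - T ** Ct - Ct ** T - \<alpha> *\<^sub>R (Ct ** Ct)"
      by (simp add: R_def V_def b1 mpow_half_def T_def)
    have TT: "T ** T = A" using sA(2) by (simp add: T_def)
    have eq: "X ** X - Y ** Y = \<alpha> *\<^sub>R R Ct"
    proof -
      have "(X ** X - Y ** Y) *v x = (\<alpha> *\<^sub>R R Ct) *v x" for x
        unfolding RC Y sP(2)[folded X] P_def TT[symmetric]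
        by (simp add: matrix_vector_mult_add_rdistrib matrix_vector_mult_diff_rdistrib mv_scaleR
            matrix_vector_mul_assoc[symmetric] matrix_vector_right_distrib matrix_vector_mult_scaleR
            scaleR_diff_right scaleR_add_right aa algebra_simps)
      thus ?thesis by (simp add: matrix_eq)
    qed
    have "frob_norm (X ** X - Y ** Y) = frob_norm (R Ct)"
      unfolding eq using alpha by (auto simp: frob_uminus)
    moreover have "X ** X = mpow \<beta> P" using sP(2) X by (simp add: mpow_def b1)
    ultimately show ?thesis using inj sP(1) X by simp
  next
    assume b2: "\<beta> = -1"
    define SP where "SP = msqrt P"
    have iSP: "invertible SP" using sqrt_invertible[OF sP(2) iP] by (simp add: SP_def)
    have X: "X = matrix_inv SP" by (simp add: X_def mpow_half_def b2 SP_def)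
    have psdX: "pos_semidef X" unfolding X using inv_psd[OF iSP] sP(1) by (simp add: SP_def)
    have inj: "\<forall>v. X *v v = 0 \<longrightarrow> v = 0" unfolding X using inv_inj[OF iSP] by blast
    have XX: "X ** X = matrix_inv P" unfolding X using inv_sq[OF iSP] sP(2) by (simp add: SP_def)
    define T where "T = msqrt A"
    have iT: "invertible T" using sqrt_invertible[OF sA(2) iA] by (simp add: T_def)
    define Ti where "Ti = matrix_inv T"
    have TiTi: "Ti ** Ti = matrix_inv A" using inv_sq[OF iT] sA(2) by (simp add: Ti_def T_def)
    define Ai where "Ai = matrix_inv A"
    have symAi: "transpose Ai = Ai"
      using inv_sym[OF iA psd_sym[OF psdA]] by (simp add: Ai_def sym_mat_def)
    define Mk where "Mk = mat 1 + \<alpha> *\<^sub>R (transpose Z ** matrix_inv A ** Z)"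
    have pdM: "pos_def Mk" unfolding Mk_def by (rule Mk_pd[OF pdA pdAZ alpha])
    have iM: "invertible Mk" by (rule pd_invertible[OF pdM])
    note sM = msqrt[OF pd_psd[OF pdM]]
    define SMi where "SMi = matrix_inv (msqrt Mk)"
    have iSM: "invertible (msqrt Mk)" by (rule sqrt_invertible[OF sM(2) iM])
    have SMiSMi: "SMi ** SMi = matrix_inv Mk" using inv_sq[OF iSM] sM(2) by (simp add: SMi_def)
    have symSMi: "transpose SMi = SMi"
      using inv_sym[OF iSM psd_sym[OF sM(1)]] by (simp add: SMi_def sym_mat_def)
    have V: "V = Ai ** Z ** SMi" by (simp add: V_def b2 Ai_def Mk_def SMi_def)
    have VV: "V ** transpose V = Ai ** Z ** matrix_inv Mk ** transpose Z ** Ai"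
      unfolding V by (simp add: matrix_transpose_mul symSMi symAi matrix_mul_assoc SMiSMi[symmetric])
    have W: "matrix_inv P = Ai - \<alpha> *\<^sub>R (V ** transpose V)"
      unfolding VV P_def Ai_def Mk_def by (rule woodbury[OF iA iM[unfolded Mk_def]])
    have Y: "Y = Ti - \<alpha> *\<^sub>R Ct" by (simp add: Y_def mpow_half_def b2 T_def Ti_def)
    have RC: "R Ct = V ** transpose V - Ti ** Ct - Ct ** Ti + \<alpha> *\<^sub>R (Ct ** Ct)"
      by (simp add: R_def b2 mpow_half_def T_def Ti_def)
    have eq: "X ** X - Y ** Y = - (\<alpha> *\<^sub>R R Ct)"
    proof -
      have "(X ** X - Y ** Y) *v x = (- (\<alpha> *\<^sub>R R Ct)) *v x" for x
        unfolding RC Y XX W Ai_def TiTi[symmetric]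
        by (simp add: matrix_vector_mult_add_rdistrib matrix_vector_mult_diff_rdistrib mv_scaleR
            matrix_vector_mul_assoc[symmetric] matrix_vector_right_distrib matrix_vector_mult_scaleR
            matrix_vector_mult_diff_distrib scaleR_diff_right scaleR_add_right aa algebra_simps)
      thus ?thesis by (simp add: matrix_eq)
    qed
    have "frob_norm (X ** X - Y ** Y) = frob_norm (R Ct)"
      unfolding eq using alpha by (auto simp: frob_uminus)
    moreover have "X ** X = mpow \<beta> P" using XX by (simp add: mpow_def b2)
    ultimately show ?thesis using inj psdX by simp
  qed
  have c1: "frob_norm (X - Y) \<le> sqrt (sqrt (real CARD('n)) * frob_norm (R Ct))"
    using core(1)[OF conjunct1[OF main] psdY] main by auto
  have c2: "spec_norm (X - Y) \<le> frob_norm (R Ct) / sqrt (lambda_min (mpow \<beta> P))"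
    using core(2)[OF conjunct1[OF main] psdY] main by auto
  have c3: "spec_norm (X - Y) \<le> sqrt (sqrt (real CARD('n)) * frob_norm (R Ct))"
    using spec_le_frob[of "X - Y"] c1 by linarith
  show ?thesis using c1 c2 c3 unfolding X_def Y_def P_def by simp
qed

end
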